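(* Let $t$ be a positive integer and let $G$ be a graph on $n$ vertices. Suppose that $|E(G)|>\left(1-\frac{1}{t+1}\right)(t-1)n$ if $t$ is odd, and $|E(G)|>\left(1-\frac{1}{t}\right)(t-1)n$ if $t$ is even. Then $G$ contains (as a subgraph) every tree $T$ having $t$ edges. *)

theory Defs
  imports Complex_Main
begin

definition simple_graph :: "'a set \<Rightarrow> 'a set set \<Rightarrow> bool" where
  "simple_graph V E \<longleftrightarrow> finite V \<and> (\<forall>e\<in>E. e \<subseteq> V \<and> card e = 2)"

definition adj :: "'a set set \<Rightarrow> 'a \<Rightarrow> 'a \<Rightarrow> bool" where
  "adj E u v \<longleftrightarrow> {u, v} \<in> E"

definition connected_graph :: "'a set \<Rightarrow> 'a set set \<Rightarrow> bool" where
  "connected_graph V E \<longleftrightarrow> V \<noteq> {} \<and>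
     (\<forall>u\<in>V. \<forall>v\<in>V. (u, v) \<in> {(x, y). adj E x y}\<^sup>*)"

definition is_cycle :: "'a set set \<Rightarrow> 'a list \<Rightarrow> bool" where
  "is_cycle E vs \<longleftrightarrow> length vs \<ge> 3 \<and> distinct vs \<and>
     (\<forall>i. Suc i < length vs \<longrightarrow> adj E (vs ! i) (vs ! Suc i)) \<and>
     adj E (last vs) (hd vs)"

definition acyclic_graph :: "'a set set \<Rightarrow> bool" where
  "acyclic_graph E \<longleftrightarrow> (\<nexists>vs. is_cycle E vs)"

definition is_tree :: "'a set \<Rightarrow> 'a set set \<Rightarrow> bool" where
  "is_tree V E \<longleftrightarrow> simple_graph V E \<and> connected_graph V E \<and> acyclic_graph E"

definition contains_subgraph :: "'a set \<Rightarrow> 'a set set \<Rightarrow> 'b set \<Rightarrow> 'b set set \<Rightarrow> bool" where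
  "contains_subgraph V E W F \<longleftrightarrow>
     (\<exists>f. inj_on f W \<and> f ` W \<subseteq> V \<and> (\<forall>e\<in>F. f ` e \<in> E))"

end

theory Submission
  imports Defs
begin


definition tpath :: "'a set set \<Rightarrow> 'a list \<Rightarrow> bool" where
 "tpath F vs \<longleftrightarrow> distinct vs \<and> (\<forall>i. Suc i < length vs \<longrightarrow> adj F (vs!i) (vs!Suc i))"

lemma adj_sym: "adj F u v \<longleftrightarrow> adj F v u" by (simp add: adj_def insert_commute)

lemma simple_adj: "simple_graph W F \<Longrightarrow> adj F u v \<Longrightarrow> u \<in> W \<and> v \<in> W \<and> u \<noteq> v"
proof -
  assume sg: "simple_graph W F" and a: "adj F u v"
  hence "{u,v} \<subseteq> W" "card {u,v} = 2" unfolding simple_graph_def adj_def by auto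
  thus ?thesis by (cases "u = v") auto
qed

lemma edge_form: "simple_graph W F \<Longrightarrow> e \<in> F \<Longrightarrow> x \<in> e \<Longrightarrow> \<exists>q. e = {x,q} \<and> q \<noteq> x \<and> q \<in> W"
proof -
  assume sg: "simple_graph W F" and e: "e \<in> F" and x: "x \<in> e"
  hence sub: "e \<subseteq> W" and c: "card e = 2" unfolding simple_graph_def by auto
  from c obtain a b where ab: "e = {a,b}" "a \<noteq> b" unfolding card_2_iff by blast
  show ?thesis
  proof (cases "x = a")
    case True thus ?thesis using ab sub by auto
  next
    case False
    hence "x = b" using x ab by auto
    thus ?thesis using ab sub by (auto simp: insert_commute)
  qed
qed

lemma tpath_rev: "tpath F vs \<Longrightarrow> tpath F (rev vs)"
  unfolding tpath_def
proof safe
  fix i assume d: "distinct vs" and a: "\<forall>i. Suc i < length vs \<longrightarrow> adj F (vs ! i) (vs ! Suc i)"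
    and i: "Suc i < length (rev vs)"
  have "adj F (vs ! (length vs - Suc (Suc i))) (vs ! Suc (length vs - Suc (Suc i)))"
    using a i by auto
  moreover have "Suc (length vs - Suc (Suc i)) = length vs - Suc i" using i by auto
  ultimately show "adj F (rev vs ! i) (rev vs ! Suc i)"
    using i by (simp add: rev_nth adj_sym)
qed simp

lemma tpath_snoc: "tpath F vs \<Longrightarrow> q \<notin> set vs \<Longrightarrow> vs \<noteq> [] \<Longrightarrow> adj F (last vs) q \<Longrightarrow> tpath F (vs@[q])"
  unfolding tpath_def
proof safe
  fix i assume d: "distinct vs" and a: "\<forall>i. Suc i < length vs \<longrightarrow> adj F (vs ! i) (vs ! Suc i)"
    and i: "Suc i < length (vs @ [q])" and ne: "vs \<noteq> []" and l: "adj F (last vs) q"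
  show "adj F ((vs @ [q]) ! i) ((vs @ [q]) ! Suc i)"
  proof (cases "Suc i < length vs")
    case True thus ?thesis using a by (simp add: nth_append)
  next
    case False
    hence "i = length vs - 1" using i by auto
    thus ?thesis using l ne by (simp add: nth_append last_conv_nth)
  qed
qed auto

lemma tpath_drop_cycle:
  assumes "tpath F vs" "j + 3 \<le> length vs" "adj F (last vs) (vs ! j)"
  shows "is_cycle F (drop j vs)"
  using assms unfolding tpath_def is_cycle_def
  by (auto simp: hd_drop_conv_nth)

definition leaf :: "'a set \<Rightarrow> 'a set set \<Rightarrow> 'a \<Rightarrow> 'a \<Rightarrow> bool" where
  "leaf W F x p \<longleftrightarrow> x \<in> W \<and> p \<in> W \<and> x \<noteq> p \<and> {x,p} \<in> F \<and> (\<forall>q. {x,q} \<in> F \<longrightarrow> q = p)"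

lemma leafD: "leaf W F x p \<Longrightarrow> x \<in> W \<and> p \<in> W \<and> x \<noteq> p \<and> {x,p} \<in> F"
  unfolding leaf_def by blast

lemma leafU: "leaf W F x p \<Longrightarrow> {x,q} \<in> F \<Longrightarrow> q = p"
  unfolding leaf_def by blast

lemma max_path_leaf:
  assumes sg: "simple_graph W F" and ac: "acyclic_graph F" and tp: "tpath F vs" and len: "length vs \<ge> 2"
    and mx: "\<forall>ws. tpath F ws \<longrightarrow> length ws \<le> length vs"
  shows "leaf W F (last vs) (vs ! (length vs - 2))"
proof -
  let ?n = "length vs"
  have ne: "vs \<noteq> []" using len by auto
  have lst: "last vs = vs ! (?n - 1)" using ne by (simp add: last_conv_nth)
  have a: "adj F (vs ! (?n - 2)) (vs ! Suc (?n - 2))" using tp len unfolding tpath_def by auto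
  have s: "Suc (?n - 2) = ?n - 1" using len by auto
  have a1: "adj F (vs ! (?n - 2)) (last vs)" using a unfolding s lst by simp
  have a2: "adj F (last vs) (vs ! (?n - 2))" using a1 by (subst adj_sym)
  have q: "q = vs ! (?n - 2)" if aq: "adj F (last vs) q" for q
  proof (cases "q \<in> set vs")
    case False
    have "tpath F (vs @ [q])" by (rule tpath_snoc[OF tp False ne aq])
    hence "length (vs @ [q]) \<le> length vs" using mx by blast
    thus ?thesis by simp
  next
    case True
    then obtain j where j: "j < ?n" "q = vs ! j" by (auto simp: in_set_conv_nth)
    have "q \<noteq> last vs" using simple_adj[OF sg aq] by auto
    hence "j \<noteq> ?n - 1" using j lst by auto
    moreover have "\<not> j + 3 \<le> ?n"
    proof
      assume "j + 3 \<le> ?n"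
      hence "is_cycle F (drop j vs)" using tpath_drop_cycle[OF tp] aq j by auto
      thus False using ac unfolding acyclic_graph_def by auto
    qed
    ultimately have "j = ?n - 2" using j by auto
    thus ?thesis using j by simp
  qed
  have "\<forall>q'. {last vs, q'} \<in> F \<longrightarrow> q' = vs ! (?n - 2)"
  proof (intro allI impI)
    fix q' assume "{last vs, q'} \<in> F"
    hence "adj F (last vs) q'" unfolding adj_def .
    thus "q' = vs ! (?n - 2)" by (rule q)
  qed
  moreover have "{last vs, vs ! (?n - 2)} \<in> F" using a2 unfolding adj_def .
  ultimately show ?thesis unfolding leaf_def
    using simple_adj[OF sg a2] by blast
qed

lemma two_leaves:
  assumes tr: "is_tree W F" and ab: "a \<in> W" "b \<in> W" "a \<noteq> b"
  shows "\<exists>x p y p'. leaf W F x p \<and> leaf W F y p' \<and> x \<noteq> y"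
proof -
  have sg: "simple_graph W F" and ac: "acyclic_graph F" and cn: "connected_graph W F"
    using tr unfolding is_tree_def by auto
  have "(a, b) \<in> {(x, y). adj F x y}\<^sup>*" using cn ab unfolding connected_graph_def by auto
  then obtain c where ac1: "adj F a c" using ab(3) by (cases rule: converse_rtranclE) auto
  have tp0: "tpath F [a,c]" using simple_adj[OF sg ac1] ac1 unfolding tpath_def
    by (auto simp: less_Suc_eq)
  have bnd: "length ws < card W + 2" if "tpath F ws \<and> length ws \<ge> 2" for ws
  proof -
    have "set ws \<subseteq> W"
    proof
      fix v assume "v \<in> set ws"
      then obtain i where i: "i < length ws" "v = ws ! i" by (auto simp: in_set_conv_nth)
      show "v \<in> W"
      proof (cases "Suc i < length ws")
        case True thus ?thesis using that i simple_adj[OF sg] unfolding tpath_def by blast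
      next
        case False
        hence "Suc (i - 1) < length ws" "Suc (i-1) = i" using i that by auto
        thus ?thesis using that i simple_adj[OF sg] unfolding tpath_def by metis
      qed
    qed
    hence "length ws \<le> card W" using that distinct_card[of ws] card_mono[of W "set ws"] sg
      unfolding tpath_def simple_graph_def by auto
    thus ?thesis by auto
  qed
  obtain vs where vs: "tpath F vs \<and> length vs \<ge> 2"
    and mx0: "\<forall>ws. tpath F ws \<and> length ws \<ge> 2 \<longrightarrow> length ws \<le> length vs"
    using Lattices_Big.ex_has_greatest_nat[of "\<lambda>ws. tpath F ws \<and> length ws \<ge> 2" "[a,c]" length "card W + 2"]
      tp0 bnd by auto
  have mx: "\<forall>ws. tpath F ws \<longrightarrow> length ws \<le> length vs"
  proof safe
    fix ws assume "tpath F ws"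
    thus "length ws \<le> length vs" using mx0 vs by (cases "length ws \<ge> 2") auto
  qed
  have l1: "leaf W F (last vs) (vs ! (length vs - 2))" using max_path_leaf[OF sg ac] vs mx by auto
  have mx': "\<forall>ws. tpath F ws \<longrightarrow> length ws \<le> length (rev vs)" using mx by simp
  have l2: "leaf W F (last (rev vs)) (rev vs ! (length (rev vs) - 2))"
    using max_path_leaf[OF sg ac _ _ mx'] vs tpath_rev by auto
  have "last vs \<noteq> last (rev vs)"
  proof -
    have ne: "vs \<noteq> []" using vs by auto
    have "last (rev vs) = vs ! 0" using ne by (simp add: last_rev hd_conv_nth)
    moreover have "last vs = vs ! (length vs - 1)" using ne by (simp add: last_conv_nth)
    moreover have "distinct vs" using vs unfolding tpath_def by auto
    moreover have "length vs - 1 \<noteq> 0" "length vs - 1 < length vs" "0 < length vs" using vs by auto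
    moreover have "vs ! (length vs - 1) \<noteq> vs ! 0"
    proof
      assume "vs ! (length vs - 1) = vs ! 0"
      hence "length vs - 1 = 0" using nth_eq_iff_index_eq[OF \<open>distinct vs\<close> \<open>length vs - 1 < length vs\<close> \<open>0 < length vs\<close>] by simp
      thus False using \<open>length vs - 1 \<noteq> 0\<close> by simp
    qed
    ultimately show ?thesis by simp
  qed
  thus ?thesis using l1 l2 by blast
qed

lemma leaf_edges:
  assumes "simple_graph W F" "leaf W F x p"
  shows "{e\<in>F. x \<notin> e} = F - {{x,p}}"
proof (intro equalityI subsetI)
  fix e assume e: "e \<in> {e\<in>F. x \<notin> e}"
  thus "e \<in> F - {{x,p}}" by auto
next
  fix e assume e: "e \<in> F - {{x,p}}"
  show "e \<in> {e\<in>F. x \<notin> e}"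
  proof (rule ccontr)
    assume "e \<notin> {e\<in>F. x \<notin> e}"
    hence "x \<in> e" "e \<in> F" using e by auto
    then obtain q where "e = {x,q}" using edge_form[OF assms(1)] by blast
    hence "q = p" using leafU[OF assms(2)] \<open>e \<in> F\<close> by blast
    thus False using e \<open>e = {x,q}\<close> by auto
  qed
qed


lemma remove_leaf:
  assumes tr: "is_tree W F" and lf: "leaf W F x p"
  shows "is_tree (W - {x}) {e\<in>F. x \<notin> e}"
proof -
  have sg: "simple_graph W F" and ac: "acyclic_graph F" and cn: "connected_graph W F"
    using tr unfolding is_tree_def by auto
  let ?F = "{e\<in>F. x \<notin> e}"
  have sg': "simple_graph (W - {x}) ?F" using sg unfolding simple_graph_def by auto
  have ac': "acyclic_graph ?F" using ac unfolding acyclic_graph_def is_cycle_def adj_def by blast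
  let ?R = "{(a, b). adj F a b}" and ?R' = "{(a, b). adj ?F a b}"
  have key: "(u, v) \<in> ?R\<^sup>* \<Longrightarrow> u \<noteq> x \<Longrightarrow> (v = x \<and> (u,p) \<in> ?R'\<^sup>*) \<or> (v \<noteq> x \<and> (u,v) \<in> ?R'\<^sup>*)" for u v
  proof (induction rule: rtrancl_induct)
    case base thus ?case by simp
  next
    case (step y z)
    have yz: "adj F y z" using step by auto
    show ?case
    proof (cases "y = x")
      case True
      hence "z = p" using yz leafU[OF lf] unfolding adj_def by blast
      thus ?thesis using step True leafD[OF lf] by auto
    next
      case False
      hence uy: "(u,y) \<in> ?R'\<^sup>*" using step by auto
      show ?thesis
      proof (cases "z = x")
        case True
        hence "{x,y} \<in> F" using yz unfolding adj_def by (simp add: insert_commute)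
        hence "y = p" using leafU[OF lf] by blast
        thus ?thesis using True uy by auto
      next
        case False
        hence "adj ?F y z" using yz \<open>y \<noteq> x\<close> unfolding adj_def by auto
        thus ?thesis using uy False by (auto intro: rtrancl_into_rtrancl)
      qed
    qed
  qed
  have cn': "connected_graph (W - {x}) ?F"
    unfolding connected_graph_def
  proof (intro conjI ballI)
    show "W - {x} \<noteq> {}" using leafD[OF lf] by auto
  next
    fix u v assume "u \<in> W - {x}" "v \<in> W - {x}"
    thus "(u, v) \<in> ?R'\<^sup>*" using key[of u v] cn unfolding connected_graph_def by auto
  qed
  show ?thesis using sg' ac' cn' unfolding is_tree_def by auto
qed

lemma tree_card: "is_tree W F \<Longrightarrow> card W = card F + 1"
proof (induction "card W" arbitrary: W F rule: less_induct)
  case less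
  have sg: "simple_graph W F" and cn: "connected_graph W F" using less.prems unfolding is_tree_def by auto
  have fW: "finite W" using sg unfolding simple_graph_def by auto
  have "F \<subseteq> Pow W" using sg unfolding simple_graph_def by auto
  hence fF: "finite F" using fW finite_subset by blast
  show ?case
  proof (cases "\<exists>a\<in>W. \<exists>b\<in>W. a \<noteq> b")
    case True
    then obtain a b where ab: "a\<in>W" "b\<in>W" "a\<noteq>b" by auto
    then obtain x p where lf: "leaf W F x p" using two_leaves[OF less.prems] by blast
    have t': "is_tree (W - {x}) {e\<in>F. x \<notin> e}" by (rule remove_leaf[OF less.prems lf])
    have xW: "x \<in> W" "{x,p} \<in> F" using leafD[OF lf] by auto
    have "card (W - {x}) < card W" by (rule card_Diff1_less[OF fW xW(1)])
    hence "card (W - {x}) = card {e\<in>F. x \<notin> e} + 1" by (rule less.hyps[OF _ t'])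
    moreover have "card {e\<in>F. x \<notin> e} = card F - 1"
      unfolding leaf_edges[OF sg lf] by (rule card_Diff_singleton[OF xW(2)])
    moreover have "card F > 0" using fF xW(2) card_gt_0_iff by blast
    moreover have "card (W - {x}) = card W - 1" by (rule card_Diff_singleton[OF xW(1)])
    moreover have "card W > 0" using fW xW(1) card_gt_0_iff by blast
    ultimately show ?thesis by linarith
  next
    case False
    have "W \<noteq> {}" using cn unfolding connected_graph_def by simp
    then obtain a where "a \<in> W" by blast
    hence "W = {a}" using False by blast
    moreover have "F = {}"
    proof -
      have "\<forall>e\<in>F. e \<subseteq> W \<and> card e = 2" using sg unfolding simple_graph_def by auto
      have "e \<notin> F" for e
      proof
        assume "e \<in> F"
        hence "card e \<le> card {a}" using \<open>W = {a}\<close> \<open>\<forall>e\<in>F. e \<subseteq> W \<and> card e = 2\<close> card_mono[of "{a}" e] by auto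
        thus False using \<open>e \<in> F\<close> \<open>\<forall>e\<in>F. e \<subseteq> W \<and> card e = 2\<close> by auto
      qed
      thus ?thesis by auto
    qed
    ultimately show ?thesis by simp
  qed
qed



lemma single_tree: "simple_graph {a} F \<Longrightarrow> F = {}"
proof -
  assume sg: "simple_graph {a} F"
  have "e \<notin> F" for e
  proof
    assume "e \<in> F"
    hence "card e \<le> card {a}" "card e = 2" using sg card_mono[of "{a}" e] unfolding simple_graph_def by auto
    thus False by auto
  qed
  thus ?thesis by auto
qed

lemma extend:
  assumes tr: "is_tree W F" and lf: "leaf W F x p" and fS: "finite S"
    and E2: "\<forall>e\<in>E. card e = 2"
    and f: "inj_on f (W - {x})" "f ` (W - {x}) \<subseteq> S" "\<forall>e\<in>{e\<in>F. x \<notin> e}. f ` e \<in> E"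
    and big: "card {u\<in>S. {f p, u} \<in> E} > card W - 2"
  shows "\<exists>g. inj_on g W \<and> g ` W \<subseteq> S \<and> (\<forall>e\<in>F. g ` e \<in> E) \<and> (\<forall>z\<in>W-{x}. g z = f z)"
proof -
  have sg: "simple_graph W F" using tr unfolding is_tree_def by auto
  have fW: "finite W" using sg unfolding simple_graph_def by auto
  have lf': "x \<in> W" "p \<in> W" "x \<noteq> p" "{x,p} \<in> F"
    using leafD[OF lf] by auto
  let ?N = "{u\<in>S. {f p, u} \<in> E}"
  let ?A = "f ` (W - {x} - {p})"
  have "card ?A \<le> card (W - {x} - {p})" by (intro card_image_le) (simp add: fW)
  also have "\<dots> = card (W - {x}) - 1" using lf' by (intro card_Diff_singleton) auto
  also have "\<dots> = card W - 2" using card_Diff_singleton[OF lf'(1)] by simp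
  finally have "card ?A < card ?N" using big by linarith
  moreover have "finite ?A" using fW by simp
  ultimately have "\<not> ?N \<subseteq> ?A" using card_mono[of ?A ?N] by linarith
  then obtain y where y: "y \<in> S" "{f p, y} \<in> E" "y \<notin> ?A" by auto
  have "y \<noteq> f p"
  proof
    assume "y = f p"
    hence "card {f p, y} = 1" by simp
    thus False using E2 y(2) by simp
  qed
  hence yn: "y \<notin> f ` (W - {x})" using y(3) by auto
  define g where "g = f(x := y)"
  have "inj_on g W"
  proof -
    have i1: "inj_on g (W - {x})" using f(1) unfolding g_def inj_on_def by auto
    have i2: "g x \<notin> g ` (W - {x})" using yn unfolding g_def by auto
    have "inj_on g (insert x (W - {x}))" unfolding inj_on_insert using i1 i2 by simp
    moreover have "insert x (W - {x}) = W" using lf'(1) by auto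
    ultimately show ?thesis by simp
  qed
  moreover have "g ` W \<subseteq> S" using f(2) y(1) unfolding g_def by auto
  moreover have "\<forall>e\<in>F. g ` e \<in> E"
  proof
    fix e assume e: "e \<in> F"
    show "g ` e \<in> E"
    proof (cases "x \<in> e")
      case True
      then obtain q where "e = {x,q}" "q \<noteq> x" using edge_form[OF sg e] by blast
      moreover have "q = p" using leafU[OF lf] e \<open>e = {x,q}\<close> by blast
      ultimately have "e = {x,p}" "p \<noteq> x" using lf' by auto
      hence "g ` e = {f p, y}" unfolding g_def by auto
      thus ?thesis using y by simp
    next
      case False
      hence "g ` e = f ` e" unfolding g_def by auto
      thus ?thesis using f(3) e False by auto
    qed
  qed
  moreover have "\<forall>z\<in>W-{x}. g z = f z" unfolding g_def by auto
  ultimately show ?thesis by blast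
qed

lemma embed:
  fixes S :: "'a set" and E :: "'a set set" and W :: "'b set"
  assumes fS: "finite S" and E2: "\<forall>e\<in>E. card e = 2"
    and deg: "\<forall>v\<in>S. card {u\<in>S. {v,u} \<in> E} \<ge> k"
  shows "is_tree W F \<Longrightarrow> card W \<le> k + 1 \<Longrightarrow> r \<in> W \<Longrightarrow> s \<in> S \<Longrightarrow>
     \<exists>f. inj_on f W \<and> f ` W \<subseteq> S \<and> f r = s \<and> (\<forall>e\<in>F. f ` e \<in> E)"
proof (induction "card W" arbitrary: W F r rule: less_induct)
  case less
  have sg: "simple_graph W F" using less.prems unfolding is_tree_def by auto
  have fW: "finite W" using sg unfolding simple_graph_def by auto
  show ?case
  proof (cases "\<exists>a\<in>W. \<exists>b\<in>W. a \<noteq> b")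
    case False
    hence W: "W = {r}" using less.prems(3) by auto
    have "F = {}" using sg unfolding W by (rule single_tree)
    thus ?thesis using W less.prems(4) by auto
  next
    case True
    then obtain a b where ab: "a\<in>W" "b\<in>W" "a\<noteq>b" by auto
    then obtain x1 p1 x2 p2 where l: "leaf W F x1 p1" "leaf W F x2 p2" "x1 \<noteq> x2"
      using two_leaves[OF less.prems(1)] by blast
    obtain x p where lf: "leaf W F x p" "x \<noteq> r" using l by metis
    have xW: "x \<in> W" "p \<in> W" "p \<noteq> x" using leafD[OF lf(1)] by auto
    have t': "is_tree (W - {x}) {e\<in>F. x \<notin> e}" by (rule remove_leaf[OF less.prems(1) lf(1)])
    have lt: "card (W - {x}) < card W" by (rule card_Diff1_less[OF fW xW(1)])
    obtain f where f: "inj_on f (W - {x})" "f ` (W - {x}) \<subseteq> S" "f r = s"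
        "\<forall>e\<in>{e\<in>F. x \<notin> e}. f ` e \<in> E"
      using less.hyps[OF lt t', of r] less.prems lf(2) lt by auto
    have "f p \<in> S" using f(2) xW by auto
    hence "card {u\<in>S. {f p, u} \<in> E} \<ge> k" using deg by auto
    moreover have "card W \<ge> 2"
    proof -
      have "{a,b} \<subseteq> W" using ab by auto
      hence "card {a,b} \<le> card W" by (rule card_mono[OF fW])
      thus ?thesis using ab(3) by simp
    qed
    ultimately have big: "card {u\<in>S. {f p, u} \<in> E} > card W - 2" using less.prems(2) by linarith
    obtain g where g: "inj_on g W" "g ` W \<subseteq> S" "\<forall>e\<in>F. g ` e \<in> E" "\<forall>z\<in>W-{x}. g z = f z"
      using extend[OF less.prems(1) lf(1) fS E2 f(1,2,4) big] by blast
    have "g r = s" using g(4) f(3) less.prems(3) lf(2) by auto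
    thus ?thesis using g by blast
  qed
qed

lemma min_subset: "finite V \<Longrightarrow> P V \<Longrightarrow> \<exists>S\<subseteq>V. P S \<and> (\<forall>v\<in>S. \<not> P (S - {v}))"
proof (induction "card V" arbitrary: V rule: less_induct)
  case less
  show ?case
  proof (cases "\<forall>v\<in>V. \<not> P (V - {v})")
    case True thus ?thesis using less.prems by blast
  next
    case False
    then obtain v where v: "v \<in> V" "P (V - {v})" by auto
    have "card (V - {v}) < card V" by (rule card_Diff1_less[OF less.prems(1) v(1)])
    then obtain S where "S \<subseteq> V - {v}" "P S" "\<forall>v\<in>S. \<not> P (S - {v})"
      using less.hyps[of "V - {v}"] less.prems v by auto
    thus ?thesis by blast
  qed
qed

lemma handshake:
  assumes fS: "finite S" and A: "\<forall>e\<in>A. e \<subseteq> S \<and> card e = 2"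
  shows "2 * card A = (\<Sum>v\<in>S. card {e\<in>A. v\<in>e})"
proof -
  have "A \<subseteq> Pow S" using A by auto
  hence fA: "finite A" using fS by (simp add: finite_subset)
  have "(\<Sum>v\<in>S. card {e\<in>A. v\<in>e}) = (\<Sum>v\<in>S. \<Sum>e\<in>A. if v \<in> e then 1 else 0)"
    by (simp add: sum.inter_filter[OF fA, symmetric])
  also have "\<dots> = (\<Sum>e\<in>A. \<Sum>v\<in>S. if v \<in> e then 1 else 0)" by (rule sum.swap)
  also have "\<dots> = (\<Sum>e\<in>A. card {v\<in>S. v \<in> e})"
    by (simp add: sum.inter_filter[OF fS, symmetric])
  also have "\<dots> = (\<Sum>e\<in>A. 2)"
  proof (rule sum.cong)
    fix e assume "e \<in> A"
    hence "{v\<in>S. v \<in> e} = e" "card e = 2" using A by auto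
    thus "card {v\<in>S. v \<in> e} = 2" by simp
  qed simp
  finally show ?thesis by simp
qed

lemma deg_nb:
  assumes E2: "\<forall>e\<in>E. card e = 2" and v: "v \<in> S"
  shows "card {e\<in>E. e \<subseteq> S \<and> v \<in> e} = card {u\<in>S. {v,u} \<in> E}"
proof -
  have "bij_betw (\<lambda>u. {v,u}) {u\<in>S. {v,u} \<in> E} {e\<in>E. e \<subseteq> S \<and> v \<in> e}"
    unfolding bij_betw_def
  proof
    show "inj_on (\<lambda>u. {v,u}) {u\<in>S. {v,u} \<in> E}" unfolding inj_on_def by (auto simp: doubleton_eq_iff)
  next
    show "(\<lambda>u. {v,u}) ` {u\<in>S. {v,u} \<in> E} = {e\<in>E. e \<subseteq> S \<and> v \<in> e}"
    proof (intro equalityI subsetI)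
      fix e assume "e \<in> (\<lambda>u. {v,u}) ` {u\<in>S. {v,u} \<in> E}"
      thus "e \<in> {e\<in>E. e \<subseteq> S \<and> v \<in> e}" using v by auto
    next
      fix e assume e: "e \<in> {e\<in>E. e \<subseteq> S \<and> v \<in> e}"
      have "card e = 2" using E2 e by blast
      then obtain a b where ab: "e = {a,b}" "a \<noteq> b" unfolding card_2_iff by blast
      have "v \<in> e" using e by blast
      hence "e = {v,b} \<or> e = {v,a}" using ab by (auto simp: insert_commute)
      then obtain u where "e = {v,u}" by blast
      thus "e \<in> (\<lambda>u. {v,u}) ` {u\<in>S. {v,u} \<in> E}" using e by auto
    qed
  qed
  thus ?thesis by (simp add: bij_betw_same_card)
qed



theorem proposition4p2:
  fixes V :: "'a set" and E :: "'a set set" and t :: nat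
  assumes "t > 0"
    and "simple_graph V E"
    and "odd t \<Longrightarrow> real (card E) > (1 - 1 / real (t + 1)) * (real t - 1) * real (card V)"
    and "even t \<Longrightarrow> real (card E) > (1 - 1 / real t) * (real t - 1) * real (card V)"
  shows "\<forall>(W :: 'b set) (F :: 'b set set). is_tree W F \<and> card F = t \<longrightarrow> contains_subgraph V E W F"
proof (intro allI impI)
  fix W :: "'b set" and F assume tF: "is_tree W F \<and> card F = t"
  define c where "c = (if odd t then (1 - 1/real(t+1)) * (real t - 1) else (1 - 1/real t) * (real t - 1))"
  have hE: "real (card E) > c * real (card V)" using assms(3,4) by (cases "odd t") (auto simp: c_def)
  have c1: "c > real t - 2"
  proof (cases "odd t")
    case True
    have "(1 - 1/real(t+1)) * (real t - 1) = real t * (real t - 1) / (real t + 1)"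
      by (simp add: field_simps)
    moreover have "real t * (real t - 1) / (real t + 1) > real t - 2"
      by (simp add: field_simps)
    ultimately show ?thesis using True by (simp add: c_def)
  next
    case False
    have "(1 - 1/real t) * (real t - 1) = (real t - 1)^2 / real t"
      using assms(1) by (simp add: field_simps power2_eq_square)
    moreover have "(real t - 1)^2 / real t > real t - 2"
      using assms(1) by (simp add: field_simps power2_eq_square)
    ultimately show ?thesis using False by (simp add: c_def)
  qed
  have c2: "2 * c \<ge> real t - 1"
  proof (cases "odd t")
    case True
    have "(1 - 1/real(t+1)) * (real t - 1) = real t * (real t - 1) / (real t + 1)"
      by (simp add: field_simps)
    moreover have "2 * (real t * (real t - 1) / (real t + 1)) \<ge> real t - 1"
    proof -
      have h: "0 \<le> (real t - 1) * (real t - 1)" by simp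
      have "real t * 2 \<le> 1 + real t * real t" using h by (simp add: algebra_simps)
      thus ?thesis using assms(1) by (simp add: field_simps)
    qed
    ultimately show ?thesis using True by (simp add: c_def)
  next
    case False
    hence "t \<ge> 2" using assms(1) by presburger
    have "(1 - 1/real t) * (real t - 1) = (real t - 1)^2 / real t"
      using assms(1) by (simp add: field_simps power2_eq_square)
    moreover have "2 * ((real t - 1)^2 / real t) \<ge> real t - 1"
    proof -
      have h: "0 \<le> (real t - 1) * (real t - 2)" using \<open>t \<ge> 2\<close> by simp
      have "real t * 3 \<le> 2 + real t * real t" using h by (simp add: algebra_simps)
      thus ?thesis using \<open>t \<ge> 2\<close> by (simp add: field_simps power2_eq_square)
    qed
    ultimately show ?thesis using False by (simp add: c_def)
  qed
  have fV: "finite V" and EV: "\<forall>e\<in>E. e \<subseteq> V \<and> card e = 2" using assms(2) unfolding simple_graph_def by auto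
  have E2: "\<forall>e\<in>E. card e = 2" using EV by auto
  define es where "es S = card {e\<in>E. e \<subseteq> S}" for S
  have "{e\<in>E. e \<subseteq> V} = E" using EV by auto
  hence "real (es V) > c * real (card V)" using hE unfolding es_def by simp
  then obtain S where S: "S \<subseteq> V" "real (es S) > c * real (card S)"
      "\<forall>v\<in>S. \<not> real (es (S - {v})) > c * real (card (S - {v}))"
    using min_subset[OF fV, of "\<lambda>S. real (es S) > c * real (card S)"] by blast
  have fS: "finite S" by (rule finite_subset[OF S(1) fV])
  have "E \<subseteq> Pow V" using EV by auto
  hence fE: "finite E" using fV by (simp add: finite_subset)
  define N where "N v = {u\<in>S. {v,u} \<in> E}" for v
  have split: "es S = es (S - {v}) + card {e\<in>E. e \<subseteq> S \<and> v \<in> e}" if "v \<in> S" for v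
  proof -
    have "{e\<in>E. e \<subseteq> S} = {e\<in>E. e \<subseteq> S - {v}} \<union> {e\<in>E. e \<subseteq> S \<and> v \<in> e}" by auto
    moreover have "finite {e\<in>E. e \<subseteq> S - {v}}" "finite {e\<in>E. e \<subseteq> S \<and> v \<in> e}" using fE by auto
    ultimately show ?thesis unfolding es_def by (subst card_Un_disjoint[symmetric]) auto
  qed
  have mindeg: "card (N v) \<ge> t - 1" if v: "v \<in> S" for v
  proof -
    have cS: "real (card (S - {v})) = real (card S) - 1" proof -
      have "card S \<ge> 1" using fS v card_gt_0_iff[of S] by (cases "card S") auto
      thus ?thesis using card_Diff_singleton[OF v] by (simp add: of_nat_diff)
    qed
    have "real (es (S - {v})) \<le> c * (real (card S) - 1)" using S(3) v cS by force
    hence "real (card {e\<in>E. e \<subseteq> S \<and> v \<in> e}) > c" using split[OF v] S(2)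
      by (simp add: algebra_simps)
    hence "real (card (N v)) > real t - 2" using deg_nb[OF E2 v] c1 unfolding N_def by simp
    thus ?thesis by linarith
  qed
  obtain w where w: "w \<in> S" "card (N w) \<ge> t"
  proof (rule ccontr)
    assume "\<not> thesis"
    hence lo: "\<forall>v\<in>S. card (N v) \<le> t - 1" using that by force
    have "2 * es S = (\<Sum>v\<in>S. card {e\<in>{e\<in>E. e \<subseteq> S}. v\<in>e})"
      unfolding es_def by (rule handshake[OF fS]) (use E2 in auto)
    also have "\<dots> = (\<Sum>v\<in>S. card (N v))"
    proof (rule sum.cong)
      fix v assume v: "v \<in> S"
      have "{e\<in>{e\<in>E. e \<subseteq> S}. v\<in>e} = {e\<in>E. e \<subseteq> S \<and> v \<in> e}" by blast
      thus "card {e\<in>{e\<in>E. e \<subseteq> S}. v\<in>e} = card (N v)" using deg_nb[OF E2 v] unfolding N_def by simp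
    qed simp
    also have "\<dots> \<le> (\<Sum>v\<in>S. t - 1)" using lo by (intro sum_mono) auto
    finally have "2 * es S \<le> card S * (t - 1)" by simp
    hence "real (2 * es S) \<le> real (card S * (t - 1))" by (rule of_nat_mono)
    moreover have "real (t - 1) = real t - 1" using assms(1) by (simp add: of_nat_diff)
    ultimately have "2 * real (es S) \<le> real (card S) * (real t - 1)" by simp
    moreover have "real (card S) * (real t - 1) \<le> real (card S) * (2 * c)" using c2 by (intro mult_left_mono) auto
    ultimately show False using S(2) by (simp add: algebra_simps)
  qed
  have tr: "is_tree W F" and cF: "card F = t" using tF by auto
  have cW: "card W = t + 1" using tree_card[OF tr] cF by simp
  have sg: "simple_graph W F" using tr unfolding is_tree_def by auto
  have fW: "finite W" using sg unfolding simple_graph_def by auto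
  obtain a b where ab: "a \<in> W" "b \<in> W" "a \<noteq> b"
  proof -
    have "card W \<ge> 2" using cW assms(1) by simp
    then obtain a b where "a \<in> W" "b \<in> W" "a \<noteq> b"
      by (metis card_2_iff' card_le_Suc0_iff_eq fW not_less_eq_eq numeral_2_eq_2)
    thus ?thesis using that by blast
  qed
  obtain x p where lf: "leaf W F x p" using two_leaves[OF tr ab] by blast
  have xW: "x \<in> W" "p \<in> W" "p \<noteq> x" using leafD[OF lf] by auto
  have t': "is_tree (W - {x}) {e\<in>F. x \<notin> e}" by (rule remove_leaf[OF tr lf])
  have cW': "card (W - {x}) \<le> (t - 1) + 1" using cW fW xW assms(1) by simp
  obtain f where f: "inj_on f (W - {x})" "f ` (W - {x}) \<subseteq> S" "f p = w"
      "\<forall>e\<in>{e\<in>F. x \<notin> e}. f ` e \<in> E"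
    using embed[OF fS E2, of "t - 1", OF _ t' cW', of p w] mindeg xW w(1) unfolding N_def by auto
  have big: "card {u\<in>S. {f p, u} \<in> E} > card W - 2" using w(2) f(3) cW assms(1) unfolding N_def by simp
  obtain g where g: "inj_on g W" "g ` W \<subseteq> S" "\<forall>e\<in>F. g ` e \<in> E"
    using extend[OF tr lf fS E2 f(1,2,4) big] by blast
  show "contains_subgraph V E W F" unfolding contains_subgraph_def
    using g S(1) by blast
qed

end
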